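(* Let $G$ be a finite, simple, connected graph with vertex set $V$ and maximum degree $m$, and let $\sigma:V\to V$ be an involution of $G$. Let $v\in V$ with $v':=\sigma(v)\neq v$, and let $d=d(v,v')$ be the graph distance between $v$ and $v'$. For a real number $Q$, let $H=A_G+D_Q$ where the potential is $Q$ at $v$ and at $v'$ and $0$ at every other vertex. Then for every $Q\ge m$, $$F(Q)>1-\frac{16\sqrt{m+1}}{\sqrt{Q}},$$ and moreover this lower bound is attained by $p(t)$ at some time $t\ge 0$ with $t=O\big(Q^{d-1}\big)$ as $Q\to\infty$.
   Context: $A_G$ is the adjacency matrix of $G$ and $D_Q$ is the diagonal matrix whose diagonal entries are the potential values at the vertices. An involution of $G$ is a bijection $\sigma:V\to V$ with $\sigma\circ\sigma=\mathrm{id}$ such that $x\sim y$ implies $\sigma(x)\sim\sigma(y)$ (and which preserves the potential; here the potential is $Q$ on $\{v,v'\}$ and $0$ elsewhere, so this holds automatically). The transfer probability from $v$ to $v'$ at time $t$ is $p(t)=|\langle e_v, e^{itH} e_{v'}\rangle|^2$, where $e_x$ is the standard basis vector of vertex $x$, and the fidelity is $F(Q)=\sup_{t\ge 0}p(t)$. *)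

theory Defs
  imports "HOL-Analysis.Analysis" "HOL-Library.Landau_Symbols"
begin

definition simple_graph :: "('n \<Rightarrow> 'n \<Rightarrow> bool) \<Rightarrow> bool" where
  "simple_graph E \<longleftrightarrow> (\<forall>x y. E x y \<longrightarrow> E y x) \<and> (\<forall>x. \<not> E x x)"

definition connected_graph :: "('n \<Rightarrow> 'n \<Rightarrow> bool) \<Rightarrow> bool" where
  "connected_graph E \<longleftrightarrow> (\<forall>x y. E\<^sup>*\<^sup>* x y)"

definition degree :: "('n \<Rightarrow> 'n \<Rightarrow> bool) \<Rightarrow> 'n \<Rightarrow> nat" where
  "degree E x = card {y. E x y}"

definition max_degree :: "('n::finite \<Rightarrow> 'n \<Rightarrow> bool) \<Rightarrow> nat" where
  "max_degree E = Max (range (degree E))"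

definition graph_dist :: "('n \<Rightarrow> 'n \<Rightarrow> bool) \<Rightarrow> 'n \<Rightarrow> 'n \<Rightarrow> nat" where
  "graph_dist E x y = (LEAST n. (E ^^ n) x y)"

definition involution :: "('n \<Rightarrow> 'n \<Rightarrow> bool) \<Rightarrow> ('n \<Rightarrow> 'n) \<Rightarrow> bool" where
  "involution E \<sigma> \<longleftrightarrow> \<sigma> \<circ> \<sigma> = id \<and> (\<forall>x y. E x y \<longrightarrow> E (\<sigma> x) (\<sigma> y))"

definition adj_matrix :: "('n::finite \<Rightarrow> 'n \<Rightarrow> bool) \<Rightarrow> complex^'n^'n" where
  "adj_matrix E = (\<chi> i j. if E i j then 1 else 0)"

definition potential_matrix :: "real \<Rightarrow> 'n::finite \<Rightarrow> 'n \<Rightarrow> complex^'n^'n" where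
  "potential_matrix Q v v' = (\<chi> i j. if i = j \<and> (i = v \<or> i = v') then complex_of_real Q else 0)"

definition hamiltonian :: "('n::finite \<Rightarrow> 'n \<Rightarrow> bool) \<Rightarrow> real \<Rightarrow> 'n \<Rightarrow> 'n \<Rightarrow> complex^'n^'n" where
  "hamiltonian E Q v v' = adj_matrix E + potential_matrix Q v v'"

definition mat_exp :: "complex^'n::finite^'n \<Rightarrow> complex^'n^'n" where
  "mat_exp M = (\<Sum>k. (1 / fact k) *\<^sub>R (((**) M) ^^ k) (mat 1))"

definition cscale_mat :: "complex \<Rightarrow> complex^'n::finite^'n \<Rightarrow> complex^'n^'n" where
  "cscale_mat c M = (\<chi> i j. c * M $ i $ j)"

definition transfer_prob ::
  "('n::finite \<Rightarrow> 'n \<Rightarrow> bool) \<Rightarrow> real \<Rightarrow> 'n \<Rightarrow> 'n \<Rightarrow> real \<Rightarrow> real" where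
  "transfer_prob E Q v v' t =
     (cmod (mat_exp (cscale_mat (\<i> * complex_of_real t) (hamiltonian E Q v v')) $ v $ v'))\<^sup>2"

definition fidelity :: "('n::finite \<Rightarrow> 'n \<Rightarrow> bool) \<Rightarrow> real \<Rightarrow> 'n \<Rightarrow> 'n \<Rightarrow> real" where
  "fidelity E Q v v' = (SUP t\<in>{0..}. transfer_prob E Q v v' t)"

end

theory Submission
  imports Defs
begin


typedef (overloaded) ('n::finite) cop = "UNIV :: ((complex^'n) \<Rightarrow>\<^sub>L (complex^'n)) set"
  morphisms rep Abs_cop by auto

setup_lifting type_definition_cop

instantiation cop :: (finite) real_normed_algebra_1
begin
lift_definition norm_cop :: "'a cop \<Rightarrow> real" is norm .
lift_definition minus_cop :: "'a cop \<Rightarrow> 'a cop \<Rightarrow> 'a cop" is "(-)" .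
lift_definition uminus_cop :: "'a cop \<Rightarrow> 'a cop" is "uminus" .
lift_definition plus_cop :: "'a cop \<Rightarrow> 'a cop \<Rightarrow> 'a cop" is "(+)" .
lift_definition zero_cop :: "'a cop" is "0" .
lift_definition scaleR_cop :: "real \<Rightarrow> 'a cop \<Rightarrow> 'a cop" is "scaleR" .
lift_definition times_cop :: "'a cop \<Rightarrow> 'a cop \<Rightarrow> 'a cop" is "\<lambda>a b. a o\<^sub>L b" .
lift_definition one_cop :: "'a cop" is "id_blinfun" .
definition dist_cop :: "'a cop \<Rightarrow> 'a cop \<Rightarrow> real"
  where "dist_cop a b = norm (a - b)"
definition uniformity_cop :
  "(uniformity :: ('a cop \<times> 'a cop) filter) = (INF e\<in>{0 <..}. principal {(x, y). dist x y < e})"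
definition open_cop :: "'a cop set \<Rightarrow> bool"
  where "open_cop S = (\<forall>x\<in>S. \<forall>\<^sub>F (x', y) in uniformity. x' = x \<longrightarrow> y \<in> S)"
definition sgn_cop :: "'a cop \<Rightarrow> 'a cop"
  where "sgn_cop x = scaleR (inverse (norm x)) x"
instance
proof
  have ne: "(1::complex^'a) \<noteq> 0" by (metis one_neq_zero vec_eq_iff zero_index one_index)
  show "(0::'a cop) \<noteq> 1"
    apply transfer
  proof
    assume "0 = (id_blinfun :: (complex^'a) \<Rightarrow>\<^sub>L (complex^'a))"
    then have "blinfun_apply (0 :: (complex^'a) \<Rightarrow>\<^sub>L (complex^'a)) 1 = id_blinfun 1" by simp
    then show False using ne by simp
  qed
  show "norm (1::'a cop) = 1" apply transfer using ne by (metis norm_blinfun_id)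
next
  fix a b c :: "'a cop" and r :: real
  show "a * b * c = a * (b * c)" by transfer (rule blinfun_eqI, simp add: blinfun.bilinear_simps)
  show "(a + b) * c = a * c + b * c" by transfer (rule blinfun_eqI, simp add: blinfun.bilinear_simps)
  show "a * (b + c) = a * b + a * c" by transfer (rule blinfun_eqI, simp add: blinfun.bilinear_simps)
  show "1 * a = a" by transfer (rule blinfun_eqI, simp add: blinfun.bilinear_simps)
  show "a * 1 = a" by transfer (rule blinfun_eqI, simp add: blinfun.bilinear_simps)
  show "r *\<^sub>R a * b = r *\<^sub>R (a * b)" by transfer (rule blinfun_eqI, simp add: blinfun.bilinear_simps)
  show "a * r *\<^sub>R b = r *\<^sub>R (a * b)" by transfer (rule blinfun_eqI, simp add: blinfun.bilinear_simps)
  show "norm (a * b) \<le> norm a * norm b" by transfer (rule norm_blinfun_compose)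
  show "a + b + c = a + (b + c)" by transfer (rule add.assoc)
  show "a + b = b + a" by transfer (rule add.commute)
  show "0 + a = a" by transfer simp
  show "- a + a = 0" by transfer simp
  show "a - b = a + - b" by transfer simp
  show "r *\<^sub>R (a + b) = r *\<^sub>R a + r *\<^sub>R b" by transfer (simp add: scaleR_right_distrib)
  show "(r + s) *\<^sub>R a = r *\<^sub>R a + s *\<^sub>R a" for s by transfer (simp add: scaleR_left_distrib)
  show "r *\<^sub>R s *\<^sub>R a = (r * s) *\<^sub>R a" for s by transfer simp
  show "1 *\<^sub>R a = a" by transfer simp
  show "dist a b = norm (a - b)" by (simp add: dist_cop_def)
  show "sgn a = inverse (norm a) *\<^sub>R a" by (simp add: sgn_cop_def)
  show "(norm a = 0) = (a = 0)" by transfer simp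
  show "norm (a + b) \<le> norm a + norm b" by transfer (rule norm_triangle_ineq)
  show "norm (r *\<^sub>R a) = \<bar>r\<bar> * norm a" by transfer simp
next
  show "(uniformity :: ('a cop \<times> 'a cop) filter) = (INF e\<in>{0 <..}. principal {(x, y). dist x y < e})"
    by (rule uniformity_cop)
  fix U :: "'a cop set"
  show "open U = (\<forall>x\<in>U. \<forall>\<^sub>F (x', y) in uniformity. x' = x \<longrightarrow> y \<in> U)"
    by (rule open_cop_def)
qed
end

instance cop :: (finite) banach
proof
  fix X :: "nat \<Rightarrow> 'a cop"
  assume "Cauchy X"
  then have "Cauchy (\<lambda>n. rep (X n))"
    unfolding Cauchy_def dist_norm dist_cop_def by (simp add: minus_cop.rep_eq norm_cop.rep_eq)
  then obtain L where "(\<lambda>n. rep (X n)) \<longlonglongrightarrow> L" using Cauchy_convergent_iff convergent_def by blast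
  then have "X \<longlonglongrightarrow> Abs_cop L"
    unfolding tendsto_iff dist_norm dist_cop_def
    by (simp add: minus_cop.rep_eq norm_cop.rep_eq Abs_cop_inverse)
  then show "convergent X" by (auto simp: convergent_def)
qed


definition opm :: "complex^'n::finite^'n \<Rightarrow> 'n cop" where
  "opm M = Abs_cop (Blinfun (\<lambda>x. M *v x))"

lemma rep_opm[simp]: "rep (opm M) x = M *v x"
  unfolding opm_def
  by (simp add: Abs_cop_inverse bounded_linear_Blinfun_apply)

lemma rep_mult[simp]: "rep (A * B) x = rep A (rep B x)"
  by (simp add: times_cop.rep_eq)

lemma rep_one[simp]: "rep 1 x = x"
  by (simp add: one_cop.rep_eq)

lemma rep_scaleR[simp]: "rep (c *\<^sub>R A) x = c *\<^sub>R rep A x"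
  by (simp add: scaleR_cop.rep_eq blinfun.scaleR_left)

lemma rep_uminus[simp]: "rep (- A) x = - rep A x"
  by (simp add: uminus_cop.rep_eq blinfun.minus_left)

lemma rep_lin_scaleR[simp]: "rep A (c *\<^sub>R x) = c *\<^sub>R rep A x"
  by (simp add: blinfun.scaleR_right)

lemma rep_lin_add[simp]: "rep A (x + y) = rep A x + rep A y"
  by (simp add: blinfun.add_right)

lemma rep_lin_diff[simp]: "rep A (x - y) = rep A x - rep A y"
  by (simp add: blinfun.diff_right)

lemma bounded_linear_rep: "bounded_linear (rep :: 'n::finite cop \<Rightarrow> _)"
  by (rule bounded_linear_intro[where K=1])
     (auto simp: plus_cop.rep_eq scaleR_cop.rep_eq norm_cop.rep_eq)

lemma bounded_linear_rep_at: "bounded_linear (\<lambda>B::'n::finite cop. rep B x)"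
  by (rule bounded_linear_compose[OF blinfun.bounded_linear_left bounded_linear_rep])

lemma rep_power: "rep (opm M ^ k) x = (((**) M ^^ k) (mat 1)) *v x"
  by (induction k arbitrary: x) (simp_all add: matrix_vector_mul_assoc)

lemma bl_mv: "bounded_linear (\<lambda>N::complex^'n::finite^'n. N *v x)"
  apply (rule linear_conv_bounded_linear[THEN iffD1])
  apply (rule linearI)
  by (simp_all add: matrix_vector_mult_def vec_eq_iff sum.distrib algebra_simps scaleR_sum_right)

lemma mv_scaleR: "((c::real) *\<^sub>R (N::complex^'n::finite^'n)) *v x = c *\<^sub>R (N *v x)"
  by (simp add: matrix_vector_mult_def vec_eq_iff scaleR_sum_right)

lemma mv_axis: "((M::complex^'n::finite^'n) *v axis j 1) $ i = M $ i $ j"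
  by (simp add: matrix_vector_mult_def axis_def if_distrib cong: if_cong)

lemma mat_exp_apply: "mat_exp M *v x = rep (exp (opm M)) x"
proof -
  define P where "P k = (((**) M ^^ k) (mat 1))" for k
  define S where "S k = (1 / fact k) *\<^sub>R P k" for k
  define trm where "trm k = (opm M ^ k) /\<^sub>R fact k" for k
  have trm: "trm sums exp (opm M)" unfolding trm_def by (rule exp_converges)
  have ent: "S k $ i $ j = rep (trm k) (axis j 1) $ i" for k i j
    by (simp add: S_def trm_def rep_power P_def mv_axis divide_inverse_commute)
  have "summable S"
  proof -
    have e: "(\<lambda>k. S k $ i $ j) sums (rep (exp (opm M)) (axis j 1) $ i)" for i j
      unfolding ent
      using bounded_linear.sums[OF bounded_linear_compose[OF bounded_linear_vec_nth bounded_linear_rep_at] trm]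
      by simp
    have "S sums (\<chi> i j. rep (exp (opm M)) (axis j 1) $ i)"
    proof -
      have eq: "(\<lambda>n. sum S {..<n}) = (\<lambda>n. \<chi> i j. (\<Sum>k<n. S k $ i $ j))"
        by (auto simp: vec_eq_iff)
      show ?thesis unfolding sums_def eq
        apply (intro tendsto_vec_lambda)
        using e unfolding sums_def by simp
    qed
    then show ?thesis by (auto simp: summable_def)
  qed
  then have "(\<lambda>k. S k *v x) sums (mat_exp M *v x)"
    unfolding mat_exp_def S_def P_def
    by (intro bounded_linear.sums[OF bl_mv] summable_sums) (simp add: S_def P_def)
  moreover have "(\<lambda>k. S k *v x) sums rep (exp (opm M)) x"
  proof -
    have "S k *v x = rep (trm k) x" for k
      by (simp add: mv_scaleR S_def trm_def rep_power P_def divide_inverse_commute)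
    then show ?thesis using bounded_linear.sums[OF bounded_linear_rep_at trm] by simp
  qed
  ultimately show ?thesis using sums_unique2 by blast
qed


lemma csc: "(r::real) *\<^sub>R (z::complex) = of_real r * z"
  by (rule scaleR_conv_of_real)

lemma bl_smult: "bounded_linear (\<lambda>c::complex. c *s (w::complex^'n::finite))"
  apply (rule linear_conv_bounded_linear[THEN iffD1])
  apply (rule linearI)
  by (simp_all add: vec_eq_iff algebra_simps csc vector_scaleR_component)

lemma exp_eigen:
  assumes "M *v w = \<mu> *s w"
  shows "rep (exp (opm M)) w = exp \<mu> *s w"
proof -
  have pw: "rep (opm M ^ k) w = (\<mu> ^ k) *s w" for k
    by (induction k) (simp_all add: vector_scalar_commute assms vector_smult_assoc mult.commute)
  have "(\<lambda>k. rep (opm M ^ k /\<^sub>R fact k) w) sums rep (exp (opm M)) w"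
    using bounded_linear.sums[OF bounded_linear_rep_at exp_converges] by simp
  moreover have "(\<lambda>k. rep (opm M ^ k /\<^sub>R fact k) w) sums (exp \<mu> *s w)"
  proof -
    have "rep (opm M ^ k /\<^sub>R fact k) w = (\<mu> ^ k /\<^sub>R fact k) *s w" for k
      by (simp add: pw vec_eq_iff csc vector_scaleR_component)
    then show ?thesis using bounded_linear.sums[OF bl_smult exp_converges] by simp
  qed
  ultimately show ?thesis using sums_unique2 by blast
qed

definition cip :: "complex^'n::finite \<Rightarrow> complex^'n \<Rightarrow> complex" where
  "cip a b = (\<Sum>i\<in>UNIV. cnj (a $ i) * b $ i)"

lemma bl_cip_right: "bounded_linear (cip a)"
  apply (rule linear_conv_bounded_linear[THEN iffD1])
  apply (rule linearI)
  by (simp_all add: cip_def algebra_simps sum.distrib csc vector_scaleR_component sum_distrib_left)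

lemma bl_cip_left: "bounded_linear (\<lambda>a. cip a b)"
  apply (rule linear_conv_bounded_linear[THEN iffD1])
  apply (rule linearI)
  by (simp_all add: cip_def algebra_simps sum.distrib csc vector_scaleR_component sum_distrib_left)

lemma cip_scaleR_left[simp]: "cip (c *\<^sub>R a) b = of_real c * cip a b"
  by (simp add: cip_def sum_distrib_left algebra_simps csc vector_scaleR_component)
lemma cip_scaleR_right[simp]: "cip a (c *\<^sub>R b) = of_real c * cip a b"
  by (simp add: cip_def sum_distrib_left algebra_simps csc vector_scaleR_component)
lemma cip_smult_left[simp]: "cip (c *s a) b = cnj c * cip a b"
  by (simp add: cip_def sum_distrib_left algebra_simps)
lemma cip_smult_right[simp]: "cip a (c *s b) = c * cip a b"
  by (simp add: cip_def sum_distrib_left algebra_simps)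
lemma cip_add_left[simp]: "cip (a + a') b = cip a b + cip a' b"
  by (simp add: cip_def sum.distrib algebra_simps)
lemma cip_add_right[simp]: "cip a (b + b') = cip a b + cip a b'"
  by (simp add: cip_def sum.distrib algebra_simps)
lemma cip_diff_left[simp]: "cip (a - a') b = cip a b - cip a' b"
  by (simp add: cip_def sum_subtractf algebra_simps)
lemma cip_diff_right[simp]: "cip a (b - b') = cip a b - cip a b'"
  by (simp add: cip_def sum_subtractf algebra_simps)

lemma cip_axis[simp]: "cip (axis i 1) b = b $ i"
proof -
  have "cip (axis i 1) b = (\<Sum>j\<in>UNIV. if j = i then b $ j else 0)"
    unfolding cip_def by (rule sum.cong) (auto simp: axis_def)
  then show ?thesis by simp
qed

lemma cip_self: "cip a a = of_real ((norm a)\<^sup>2)"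
proof -
  have e: "cnj (a $ i) * a $ i = of_real ((norm (a $ i))\<^sup>2)" for i
    by (subst complex_norm_square) (simp add: mult.commute)
  have "cip a a = (\<Sum>i\<in>UNIV. of_real ((norm (a $ i))\<^sup>2))"
    unfolding cip_def by (simp only: e)
  also have "\<dots> = of_real (\<Sum>i\<in>UNIV. (norm (a $ i))\<^sup>2)"
    by (simp only: of_real_sum)
  also have "(\<Sum>i\<in>UNIV. (norm (a $ i))\<^sup>2) = (norm a)\<^sup>2"
    by (simp add: norm_vec_def L2_set_def sum_nonneg)
  finally show ?thesis .
qed

lemma cip_cs: "cmod (cip a b) \<le> norm a * norm b"
proof -
  have "cmod (cip a b) \<le> (\<Sum>i\<in>UNIV. cmod (cnj (a $ i) * b $ i))"
    unfolding cip_def by (rule norm_sum)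
  also have "\<dots> = (\<Sum>i\<in>UNIV. \<bar>norm (a $ i)\<bar> * \<bar>norm (b $ i)\<bar>)"
    by (simp add: norm_mult)
  also have "\<dots> \<le> L2_set (\<lambda>i. norm (a $ i)) UNIV * L2_set (\<lambda>i. norm (b $ i)) UNIV"
    by (rule L2_set_mult_ineq)
  finally show ?thesis by (simp add: norm_vec_def)
qed

lemma exp_adj:
  assumes adj: "\<And>w r. cip w (M *v r) = cip (N *v w) r"
  shows "cip w (rep (exp (opm M)) r) = cip (rep (exp (opm N)) w) r"
proof -
  have pw: "cip w (rep (opm M ^ k) r) = cip (rep (opm N ^ k) w) r" for k
  proof (induction k arbitrary: w)
    case 0 then show ?case by simp
  next
    case (Suc k)
    have "cip w (rep (opm M ^ Suc k) r) = cip w (M *v rep (opm M ^ k) r)" by simp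
    also have "\<dots> = cip (N *v w) (rep (opm M ^ k) r)" by (rule adj)
    also have "\<dots> = cip (rep (opm N ^ k) (N *v w)) r" by (rule Suc)
    also have "\<dots> = cip (rep (opm N ^ Suc k) w) r" by (simp only: power_Suc2 rep_mult rep_opm)
    finally show ?case .
  qed
  have "(\<lambda>k. cip w (rep (opm M ^ k /\<^sub>R fact k) r)) sums cip w (rep (exp (opm M)) r)"
    using bounded_linear.sums[OF bounded_linear_compose[OF bl_cip_right bounded_linear_rep_at] exp_converges]
    by simp
  moreover have "(\<lambda>k. cip (rep (opm N ^ k /\<^sub>R fact k) w) r) sums cip (rep (exp (opm N)) w) r"
    using bounded_linear.sums[OF bounded_linear_compose[OF bl_cip_left bounded_linear_rep_at] exp_converges]
    by simp
  moreover have "cip w (rep (opm M ^ k /\<^sub>R fact k) r) = cip (rep (opm N ^ k /\<^sub>R fact k) w) r" for k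
    by (simp add: pw)
  ultimately show ?thesis using sums_unique2 by force
qed

lemma opm_uminus: "opm (- M) = - opm M"
  by (rule rep_inject[THEN iffD1], rule blinfun_eqI)
     (simp add: blinfun.minus_left uminus_cop.rep_eq matrix_vector_mult_def vec_eq_iff sum_negf)

lemma exp_unitary:
  assumes adj: "\<And>w r. cip w (M *v r) = cip ((- M) *v w) r"
  shows "norm (rep (exp (opm M)) r) = norm r"
proof -
  have "of_real ((norm (rep (exp (opm M)) r))\<^sup>2) = cip (rep (exp (opm M)) r) (rep (exp (opm M)) r)"
    by (simp add: cip_self)
  also have "\<dots> = cip (rep (exp (opm (- M))) (rep (exp (opm M)) r)) r"
    by (rule exp_adj[OF adj])
  also have "\<dots> = cip (rep (exp (- opm M) * exp (opm M)) r) r"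
    by (simp add: opm_uminus)
  also have "exp (- opm M) * exp (opm M) = 1"
    using exp_minus_inverse[of "- opm M"] by simp
  finally have "of_real ((norm (rep (exp (opm M)) r))\<^sup>2) = (of_real ((norm r)\<^sup>2) :: complex)"
    by (simp only: rep_one cip_self)
  then have "(norm (rep (exp (opm M)) r))\<^sup>2 = (norm r)\<^sup>2"
    by (simp only: of_real_eq_iff)
  then show ?thesis by (simp add: power2_eq_iff_nonneg)
qed


locale symm =
  fixes h :: "'n::finite \<Rightarrow> 'n \<Rightarrow> real"
  assumes hsym: "h i j = h j i"
begin

definition Hv :: "real^'n \<Rightarrow> real^'n" where
  "Hv z = (\<chi> i. \<Sum>j\<in>UNIV. h i j * z $ j)"

definition R :: "real^'n \<Rightarrow> real" where
  "R z = z \<bullet> Hv z"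

lemma Hv_nth: "Hv z $ i = (\<Sum>j\<in>UNIV. h i j * z $ j)"
  by (simp add: Hv_def)

lemma Hv_add: "Hv (z + w) = Hv z + Hv w"
  by (simp add: vec_eq_iff Hv_nth algebra_simps sum.distrib)

lemma Hv_scaleR: "Hv (c *\<^sub>R z) = c *\<^sub>R Hv z"
  by (simp add: vec_eq_iff Hv_nth algebra_simps sum_distrib_left)

lemma inner_Hv: "w \<bullet> Hv z = (\<Sum>i\<in>UNIV. \<Sum>j\<in>UNIV. h i j * w $ i * z $ j)"
  by (simp add: inner_vec_def Hv_nth sum_distrib_left algebra_simps)

lemma R_sum: "R z = (\<Sum>i\<in>UNIV. \<Sum>j\<in>UNIV. h i j * z $ i * z $ j)"
  by (simp add: R_def inner_Hv)

lemma inner_Hv_sym: "w \<bullet> Hv z = z \<bullet> Hv w"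
  unfolding inner_Hv
  by (subst sum.swap) (simp add: hsym mult.commute mult.left_commute)

lemma R_scaleR: "R (c *\<^sub>R z) = c\<^sup>2 * R z"
  by (simp add: R_def Hv_scaleR power2_eq_square)

lemma bl_Hv: "bounded_linear Hv"
  apply (rule linear_conv_bounded_linear[THEN iffD1])
  apply (rule linearI) by (simp_all add: Hv_add Hv_scaleR)

lemma cont_R: "continuous_on S R"
  unfolding R_def
  by (intro continuous_intros bounded_linear.continuous_on[OF bl_Hv])

lemma variational:
  assumes add: "\<And>u w. u \<in> S \<Longrightarrow> w \<in> S \<Longrightarrow> u + w \<in> S"
    and scl: "\<And>c u. u \<in> S \<Longrightarrow> c *\<^sub>R u \<in> S"
    and HS: "\<And>u. u \<in> S \<Longrightarrow> Hv u \<in> S"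
    and zS: "z \<in> S" and max: "\<forall>u\<in>S. R u \<le> \<mu> * (u \<bullet> u)" and zR: "R z = \<mu> * (z \<bullet> z)"
  shows "Hv z = \<mu> *\<^sub>R z"
proof -
  define w where "w = Hv z - \<mu> *\<^sub>R z"
  have wS: "w \<in> S" unfolding w_def using add[OF HS[OF zS] scl[OF zS, of "-\<mu>"]] by simp
  define W where "W = w \<bullet> w"
  define K where "K = R w - \<mu> * (w \<bullet> w)"
  have ineq: "2 * e * W + e\<^sup>2 * K \<le> 0" for e
  proof -
    have uS: "z + e *\<^sub>R w \<in> S" using add[OF zS scl[OF wS]] .
    have R1: "R (z + e *\<^sub>R w) = R z + 2 * e * (w \<bullet> Hv z) + e\<^sup>2 * R w"
      unfolding R_def
      using inner_Hv_sym[of z w]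
      by (simp add: Hv_add Hv_scaleR inner_add_left inner_add_right power2_eq_square algebra_simps)
    have I1: "(z + e *\<^sub>R w) \<bullet> (z + e *\<^sub>R w) = z \<bullet> z + 2 * e * (w \<bullet> z) + e\<^sup>2 * (w \<bullet> w)"
      by (simp add: inner_add_left inner_add_right power2_eq_square algebra_simps inner_commute)
    have "w \<bullet> Hv z - \<mu> * (w \<bullet> z) = W"
      unfolding W_def by (simp add: w_def inner_diff_right inner_diff_left algebra_simps inner_commute)
    then have WH: "w \<bullet> Hv z = W + \<mu> * (w \<bullet> z)" by simp
    have "R (z + e *\<^sub>R w) \<le> \<mu> * ((z + e *\<^sub>R w) \<bullet> (z + e *\<^sub>R w))" using max uS by blast
    then have A: "R z + 2 * e * (w \<bullet> Hv z) + e\<^sup>2 * R w \<le> \<mu> * (z \<bullet> z + 2 * e * (w \<bullet> z) + e\<^sup>2 * (w \<bullet> w))"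
      unfolding R1 I1 .
    have B: "2 * e * W + e\<^sup>2 * K = (R z + 2 * e * (w \<bullet> Hv z) + e\<^sup>2 * R w) - \<mu> * (z \<bullet> z + 2 * e * (w \<bullet> z) + e\<^sup>2 * (w \<bullet> w))"
      unfolding K_def WH zR by (simp add: distrib_left distrib_right right_diff_distrib mult.assoc mult.left_commute)
    show ?thesis using A B by linarith
  qed
  have "W = 0"
  proof (rule ccontr)
    assume "W \<noteq> 0"
    then have Wp: "W > 0" unfolding W_def by auto
    define e where "e = W / (\<bar>K\<bar> + 1)"
    have ep: "e > 0" unfolding e_def using Wp by auto
    have "e * \<bar>K\<bar> \<le> W" unfolding e_def using Wp
      by (simp add: field_simps)
    then have "e\<^sup>2 * \<bar>K\<bar> \<le> e * W" using ep by (simp add: power2_eq_square mult.assoc mult_left_mono)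
    moreover have "e\<^sup>2 * K \<ge> e\<^sup>2 * (- \<bar>K\<bar>)"
      by (rule mult_left_mono) auto
    ultimately have X: "2 * e * W + e\<^sup>2 * K \<ge> e * W"
      by (simp add: algebra_simps)
    have "e * W > 0" using ep Wp by simp
    then show False using ineq[of e] X by linarith
  qed
  then have "w = 0" unfolding W_def by simp
  then show ?thesis unfolding w_def by simp
qed

lemma exists_max:
  assumes "closed S" and scl: "\<And>c u. u \<in> S \<Longrightarrow> c *\<^sub>R u \<in> S"
    and "u0 \<in> S" "u0 \<noteq> 0"
  shows "\<exists>z\<in>S. norm z = 1 \<and> (\<forall>u\<in>S. R u \<le> R z * (u \<bullet> u))"
proof -
  define K where "K = S \<inter> sphere 0 1"
  have cK: "compact K" unfolding K_def
    by (rule closed_Int_compact[OF \<open>closed S\<close> compact_sphere])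
  have "(1 / norm u0) *\<^sub>R u0 \<in> K" unfolding K_def using assms by auto
  then have "K \<noteq> {}" by auto
  from continuous_attains_sup[OF cK this cont_R]
  obtain z where zK: "z \<in> K" and zmax: "\<forall>y\<in>K. R y \<le> R z" by auto
  have "R u \<le> R z * (u \<bullet> u)" if uS: "u \<in> S" for u
  proof (cases "u = 0")
    case True then show ?thesis by (simp add: R_def Hv_def)
  next
    case False
    have "(1 / norm u) *\<^sub>R u \<in> K" unfolding K_def using False scl[OF uS] by auto
    then have "R ((1 / norm u) *\<^sub>R u) \<le> R z" using zmax by auto
    then have "R u / (norm u)\<^sup>2 \<le> R z" by (simp add: R_scaleR power_divide)
    then have "R u \<le> R z * (norm u)\<^sup>2" using False by (simp add: divide_le_eq)
    then show ?thesis by (simp add: power2_norm_eq_inner)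
  qed
  then show ?thesis using zK unfolding K_def by auto
qed

lemma ground_state:
  assumes eig: "Hv x = l *\<^sub>R x" and pos: "\<And>i. x $ i > 0"
  shows "l * (y \<bullet> y) - R y
     = (1/2) * (\<Sum>i\<in>UNIV. \<Sum>j\<in>UNIV. h i j * x $ i * x $ j * (y $ i / x $ i - y $ j / x $ j)\<^sup>2)"
proof -
  have row: "(\<Sum>j\<in>UNIV. h i j * x $ j) = l * x $ i" for i
    using arg_cong[OF eig, of "%v. v $ i"] by (simp add: Hv_nth)
  have T1: "(\<Sum>i\<in>UNIV. \<Sum>j\<in>UNIV. h i j * x $ j * ((y $ i)\<^sup>2 / x $ i)) = l * (y \<bullet> y)"
  proof -
    have "(\<Sum>i\<in>UNIV. \<Sum>j\<in>UNIV. h i j * x $ j * ((y $ i)\<^sup>2 / x $ i))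
        = (\<Sum>i\<in>UNIV. ((y $ i)\<^sup>2 / x $ i) * (\<Sum>j\<in>UNIV. h i j * x $ j))"
      by (rule sum.cong[OF refl], subst sum_distrib_left, rule sum.cong[OF refl], simp)
    also have "\<dots> = (\<Sum>i\<in>UNIV. l * (y $ i)\<^sup>2)"
      unfolding row
    proof (rule sum.cong[OF refl])
      fix i :: 'n
      have "x $ i \<noteq> 0" using pos[of i] by simp
      then show "(y $ i)\<^sup>2 / x $ i * (l * x $ i) = l * (y $ i)\<^sup>2" by simp
    qed
    also have "\<dots> = l * (y \<bullet> y)"
      by (simp add: inner_vec_def sum_distrib_left power2_eq_square)
    finally show ?thesis .
  qed
  have T2: "(\<Sum>i\<in>UNIV. \<Sum>j\<in>UNIV. h i j * x $ i * ((y $ j)\<^sup>2 / x $ j)) = l * (y \<bullet> y)"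
    using T1 by (subst sum.swap) (simp add: hsym mult.commute mult.left_commute)
  have pt: "h i j * x $ i * x $ j * (y $ i / x $ i - y $ j / x $ j)\<^sup>2
     = h i j * x $ j * ((y $ i)\<^sup>2 / x $ i) + h i j * x $ i * ((y $ j)\<^sup>2 / x $ j) - 2 * (h i j * y $ i * y $ j)" for i j
  proof -
    have xi: "x $ i \<noteq> 0" and xj: "x $ j \<noteq> 0" using pos[of i] pos[of j] by auto
    have e1: "x $ i * x $ j * (y $ i / x $ i)\<^sup>2 = x $ j * ((y $ i)\<^sup>2 / x $ i)"
      using xi by (simp add: power2_eq_square)
    have e2: "x $ i * x $ j * (y $ j / x $ j)\<^sup>2 = x $ i * ((y $ j)\<^sup>2 / x $ j)"
      using xj by (simp add: power2_eq_square)
    have e3: "x $ i * x $ j * ((y $ i / x $ i) * (y $ j / x $ j)) = y $ i * y $ j"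
      using xi xj by simp
    define A where "A = y $ i / x $ i"
    define B where "B = y $ j / x $ j"
    have "h i j * x $ i * x $ j * (A - B)\<^sup>2
       = h i j * (x $ i * x $ j * A\<^sup>2) + h i j * (x $ i * x $ j * B\<^sup>2)
         - 2 * (h i j * (x $ i * x $ j * (A * B)))"
      by (simp add: power2_diff algebra_simps)
    then have "h i j * x $ i * x $ j * (y $ i / x $ i - y $ j / x $ j)\<^sup>2
       = h i j * (x $ i * x $ j * (y $ i / x $ i)\<^sup>2) + h i j * (x $ i * x $ j * (y $ j / x $ j)\<^sup>2)
         - 2 * (h i j * (x $ i * x $ j * ((y $ i / x $ i) * (y $ j / x $ j))))"
      unfolding A_def B_def .
    then show ?thesis unfolding e1 e2 e3 by (simp add: mult.assoc)
  qed
  show ?thesis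
    unfolding pt sum.distrib sum_subtractf sum_distrib_left[symmetric] T1 T2 R_sum[of y]
    by (simp add: mult.assoc)
qed

end


lemma walk_exists:
  "(E ^^ n) a b \<Longrightarrow> \<exists>p. p 0 = a \<and> p n = b \<and> (\<forall>k<n. E (p k) (p (Suc k)))"
proof (induction n arbitrary: b)
  case 0 then show ?case by (intro exI[of _ "\<lambda>_. a"]) simp
next
  case (Suc n)
  from Suc.prems obtain c where c: "(E ^^ n) a c" "E c b" by (rule relpowp_Suc_E)
  from Suc.IH[OF c(1)] obtain p where p: "p 0 = a" "p n = c" "\<forall>k<n. E (p k) (p (Suc k))" by blast
  show ?case
    apply (rule exI[of _ "p(Suc n := b)"])
    using p c by (auto simp: less_Suc_eq)
qed

locale gsetup =
  fixes E :: "'n::finite \<Rightarrow> 'n \<Rightarrow> bool" and \<sigma> :: "'n \<Rightarrow> 'n" and v :: 'n and Q :: real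
  assumes sg: "simple_graph E" and cg: "connected_graph E"
    and inv: "involution E \<sigma>" and vne: "\<sigma> v \<noteq> v" and Qnn: "Q \<ge> 0"
begin

abbreviation "v' \<equiv> \<sigma> v"
abbreviation "m \<equiv> real (max_degree E)"

definition hh :: "'n \<Rightarrow> 'n \<Rightarrow> real" where
  "hh i j = (if E i j then 1 else 0) + (if i = j \<and> (i = v \<or> i = v') then Q else 0)"

lemma Esym: "E i j \<Longrightarrow> E j i" using sg unfolding simple_graph_def by blast
lemma Eirr: "\<not> E i i" using sg unfolding simple_graph_def by blast

lemma hh_sym: "hh i j = hh j i"
  unfolding hh_def using Esym by auto

sublocale symm hh by unfold_locales (rule hh_sym)

lemma ss[simp]: "\<sigma> (\<sigma> i) = i"
  using inv unfolding involution_def by (metis comp_apply id_apply)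

lemma inj_s: "inj \<sigma>" by (rule injI) (metis ss)
lemma surj_s: "surj \<sigma>" by (rule surjI[of _ \<sigma>]) simp
lemma bij_s: "bij \<sigma>" using inj_s surj_s by (rule bijI)

lemma E_s: "E (\<sigma> i) (\<sigma> j) = E i j"
proof
  assume "E (\<sigma> i) (\<sigma> j)"
  then have "E (\<sigma> (\<sigma> i)) (\<sigma> (\<sigma> j))" using inv unfolding involution_def by blast
  then show "E i j" by simp
next
  assume "E i j" then show "E (\<sigma> i) (\<sigma> j)" using inv unfolding involution_def by blast
qed

lemma hh_s: "hh (\<sigma> i) (\<sigma> j) = hh i j"
proof -
  have s_eq: "\<sigma> a = b \<longleftrightarrow> a = \<sigma> b" for a b by (metis ss)
  show ?thesis unfolding hh_def E_s s_eq by auto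
qed

lemma hh_nn: "hh i j \<ge> 0" unfolding hh_def using Qnn by auto

lemma hh_edge: "E i j \<Longrightarrow> hh i j \<ge> 1" unfolding hh_def using Qnn by auto

lemma sum_s: "(\<Sum>j\<in>UNIV. f (\<sigma> j)) = (\<Sum>j\<in>UNIV. f j)"
  using sum.reindex[OF inj_s, of f] surj_s by simp

definition "Sp = {z :: real^'n. \<forall>i. z $ (\<sigma> i) = z $ i}"
definition "Sm = {z :: real^'n. \<forall>i. z $ (\<sigma> i) = - z $ i}"

lemma Hv_Sp: "z \<in> Sp \<Longrightarrow> Hv z \<in> Sp"
proof -
  assume z: "z \<in> Sp"
  have "Hv z $ (\<sigma> i) = Hv z $ i" for i
  proof -
    have "Hv z $ (\<sigma> i) = (\<Sum>j\<in>UNIV. hh (\<sigma> i) (\<sigma> j) * z $ (\<sigma> j))"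
      unfolding Hv_nth by (rule sum_s[symmetric])
    also have "\<dots> = Hv z $ i" using z unfolding Sp_def by (simp add: hh_s Hv_nth)
    finally show ?thesis .
  qed
  then show ?thesis unfolding Sp_def by auto
qed

lemma Hv_Sm: "z \<in> Sm \<Longrightarrow> Hv z \<in> Sm"
proof -
  assume z: "z \<in> Sm"
  have "Hv z $ (\<sigma> i) = - Hv z $ i" for i
  proof -
    have "Hv z $ (\<sigma> i) = (\<Sum>j\<in>UNIV. hh (\<sigma> i) (\<sigma> j) * z $ (\<sigma> j))"
      unfolding Hv_nth by (rule sum_s[symmetric])
    also have "\<dots> = - Hv z $ i" using z unfolding Sm_def by (simp add: hh_s Hv_nth sum_negf)
    finally show ?thesis .
  qed
  then show ?thesis unfolding Sm_def by auto
qed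

lemma closed_Sp: "closed Sp"
  unfolding Sp_def by (intro closed_Collect_all closed_Collect_eq continuous_intros)
lemma closed_Sm: "closed Sm"
  unfolding Sm_def by (intro closed_Collect_all closed_Collect_eq continuous_intros)

lemma Sp_add: "u \<in> Sp \<Longrightarrow> w \<in> Sp \<Longrightarrow> u + w \<in> Sp" unfolding Sp_def by auto
lemma Sp_scl: "u \<in> Sp \<Longrightarrow> c *\<^sub>R u \<in> Sp" unfolding Sp_def by auto
lemma Sm_add: "u \<in> Sm \<Longrightarrow> w \<in> Sm \<Longrightarrow> u + w \<in> Sm" unfolding Sm_def by auto
lemma Sm_scl: "u \<in> Sm \<Longrightarrow> c *\<^sub>R u \<in> Sm" unfolding Sm_def by auto

lemma svv[simp]: "\<sigma> v' = v" by simp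

definition Ap :: "real^'n \<Rightarrow> real" where
  "Ap z = (\<Sum>i\<in>UNIV. \<Sum>j\<in>UNIV. (if E i j then 1 else 0) * z $ i * z $ j)"

lemma R_split: "R z = Q * ((z $ v)\<^sup>2 + (z $ v')\<^sup>2) + Ap z"
proof -
  have "R z = Ap z + (\<Sum>i\<in>UNIV. \<Sum>j\<in>UNIV. (if i = j \<and> (i = v \<or> i = v') then Q else 0) * z $ i * z $ j)"
    unfolding R_sum Ap_def hh_def by (simp add: distrib_right sum.distrib)
  also have "(\<Sum>i\<in>UNIV. \<Sum>j\<in>UNIV. (if i = j \<and> (i = v \<or> i = v') then Q else 0) * z $ i * z $ j)
      = (\<Sum>i\<in>UNIV. if i = v \<or> i = v' then Q * (z $ i)\<^sup>2 else 0)"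
  proof (rule sum.cong[OF refl])
    fix i
    have "(\<Sum>j\<in>UNIV. (if i = j \<and> (i = v \<or> i = v') then Q else 0) * z $ i * z $ j)
        = (\<Sum>j\<in>UNIV. if j = i then (if i = v \<or> i = v' then Q * (z $ i)\<^sup>2 else 0) else 0)"
      by (rule sum.cong) (auto simp: power2_eq_square)
    then show "(\<Sum>j\<in>UNIV. (if i = j \<and> (i = v \<or> i = v') then Q else 0) * z $ i * z $ j)
        = (if i = v \<or> i = v' then Q * (z $ i)\<^sup>2 else 0)" by simp
  qed
  also have "\<dots> = (\<Sum>i\<in>{v, v'}. Q * (z $ i)\<^sup>2)"
    by (subst sum.If_cases) (auto intro: sum.cong)
  also have "\<dots> = Q * ((z $ v)\<^sup>2 + (z $ v')\<^sup>2)"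
    using vne by (simp add: algebra_simps)
  finally show ?thesis by simp
qed

lemma deg_le: "(\<Sum>j\<in>UNIV. (if E i j then 1 else 0 :: real)) \<le> m"
proof -
  have "(\<Sum>j\<in>UNIV. (if E i j then 1 else 0 :: real)) = real (card {j. E i j})"
    by (simp add: sum.If_cases)
  also have "card {j. E i j} = degree E i" by (simp add: degree_def)
  also have "degree E i \<le> max_degree E"
    unfolding max_degree_def by (rule Max_ge) auto
  finally show ?thesis by simp
qed

lemma two_ab: "2 * \<bar>a * b\<bar> \<le> a\<^sup>2 + (b::real)\<^sup>2"
proof -
  have "0 \<le> (\<bar>a\<bar> - \<bar>b\<bar>)\<^sup>2" by simp
  then show ?thesis by (simp add: power2_diff abs_mult)
qed

lemma Ap_bound: "\<bar>Ap z\<bar> \<le> m * (z \<bullet> z)"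
proof -
  define a where "a i j = (if E i j then 1 else 0 :: real)" for i j
  have a_sym: "a i j = a j i" for i j unfolding a_def using Esym by auto
  have a_nn: "a i j \<ge> 0" for i j unfolding a_def by auto
  have "\<bar>Ap z\<bar> \<le> (\<Sum>i\<in>UNIV. \<bar>\<Sum>j\<in>UNIV. a i j * z $ i * z $ j\<bar>)"
    unfolding Ap_def a_def by (rule sum_abs)
  also have "\<dots> \<le> (\<Sum>i\<in>UNIV. \<Sum>j\<in>UNIV. \<bar>a i j * z $ i * z $ j\<bar>)"
    by (intro sum_mono sum_abs)
  also have "\<dots> \<le> (\<Sum>i\<in>UNIV. \<Sum>j\<in>UNIV. a i j * (z $ i)\<^sup>2 / 2 + a i j * (z $ j)\<^sup>2 / 2)"
  proof (intro sum_mono)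
    fix i j
    have "2 * \<bar>z $ i * z $ j\<bar> \<le> (z $ i)\<^sup>2 + (z $ j)\<^sup>2" by (rule two_ab)
    then have "a i j * (2 * \<bar>z $ i * z $ j\<bar>) \<le> a i j * ((z $ i)\<^sup>2 + (z $ j)\<^sup>2)"
      by (rule mult_left_mono) (rule a_nn)
    moreover have "\<bar>a i j * z $ i * z $ j\<bar> = a i j * \<bar>z $ i * z $ j\<bar>"
      using a_nn[of i j] by (simp add: abs_mult)
    ultimately show "\<bar>a i j * z $ i * z $ j\<bar> \<le> a i j * (z $ i)\<^sup>2 / 2 + a i j * (z $ j)\<^sup>2 / 2"
      by (simp add: algebra_simps)
  qed
  also have "\<dots> = (\<Sum>i\<in>UNIV. \<Sum>j\<in>UNIV. a i j * (z $ i)\<^sup>2) / 2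
                 + (\<Sum>i\<in>UNIV. \<Sum>j\<in>UNIV. a i j * (z $ j)\<^sup>2) / 2"
    by (simp add: sum.distrib sum_divide_distrib)
  also have "(\<Sum>i\<in>UNIV. \<Sum>j\<in>UNIV. a i j * (z $ j)\<^sup>2) = (\<Sum>j\<in>UNIV. \<Sum>i\<in>UNIV. a i j * (z $ j)\<^sup>2)"
    by (rule sum.swap)
  also have "\<dots> = (\<Sum>i\<in>UNIV. \<Sum>j\<in>UNIV. a i j * (z $ i)\<^sup>2)"
    by (simp add: a_sym)
  also have "(\<Sum>i\<in>UNIV. \<Sum>j\<in>UNIV. a i j * (z $ i)\<^sup>2) = (\<Sum>i\<in>UNIV. (\<Sum>j\<in>UNIV. a i j) * (z $ i)\<^sup>2)"
    by (simp add: sum_distrib_right)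
  also have "\<dots> \<le> (\<Sum>i\<in>UNIV. m * (z $ i)\<^sup>2)"
    by (intro sum_mono mult_right_mono) (simp_all add: a_def deg_le)
  also have "(\<Sum>i\<in>UNIV. m * (z $ i)\<^sup>2) = m * (z \<bullet> z)"
    by (simp add: inner_vec_def sum_distrib_left power2_eq_square)
  finally show ?thesis by (simp add: mult.commute)
qed

lemma s_eq: "\<sigma> a = b \<longleftrightarrow> a = \<sigma> b" by (metis ss)

definition u0p :: "real^'n" where "u0p = axis v 1 + axis v' 1"
definition u0m :: "real^'n" where "u0m = axis v 1 - axis v' 1"

lemma u0p_nth: "u0p $ i = (if i = v \<or> i = v' then 1 else 0)"
  unfolding u0p_def using vne by (auto simp: axis_def)
lemma u0m_nth: "u0m $ i = (if i = v then 1 else if i = v' then -1 else 0)"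
  unfolding u0m_def using vne by (auto simp: axis_def)

lemma u0p_Sp: "u0p \<in> Sp" unfolding Sp_def by (auto simp: u0p_nth s_eq)
lemma u0m_Sm: "u0m \<in> Sm" unfolding Sm_def using vne by (auto simp: u0m_nth s_eq)

lemma inner_two: "(\<Sum>i\<in>UNIV. (if i = v \<or> i = v' then (1::real) else 0)) = 2"
proof -
  have "{i. i = v \<or> i = v'} = {v, v'}" by auto
  then show ?thesis using vne by (simp add: sum.If_cases)
qed

lemma u0p_inner: "u0p \<bullet> u0p = 2"
  unfolding inner_vec_def u0p_nth using inner_two by (simp add: if_distrib cong: if_cong)
lemma u0m_inner: "u0m \<bullet> u0m = 2"
proof -
  have "u0m \<bullet> u0m = (\<Sum>i\<in>UNIV. (if i = v \<or> i = v' then (1::real) else 0))"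
    unfolding inner_vec_def u0m_nth by (rule sum.cong) auto
  then show ?thesis using inner_two by simp
qed

lemma u0p_ne: "u0p \<noteq> 0" using u0p_inner by auto
lemma u0m_ne: "u0m \<noteq> 0" using u0m_inner by auto

lemma R_u0p: "R u0p \<ge> 2 * Q - 2 * m"
proof -
  have "R u0p = Q * 2 + Ap u0p" unfolding R_split u0p_nth by simp
  moreover have "\<bar>Ap u0p\<bar> \<le> m * 2" using Ap_bound[of u0p] u0p_inner by simp
  ultimately show ?thesis by linarith
qed

lemma R_u0m: "R u0m \<ge> 2 * Q - 2 * m"
proof -
  have "R u0m = Q * 2 + Ap u0m" unfolding R_split u0m_nth using vne by simp
  moreover have "\<bar>Ap u0m\<bar> \<le> m * 2" using Ap_bound[of u0m] u0m_inner by simp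
  ultimately show ?thesis by linarith
qed

lemma R_eig: "Hv z = l *\<^sub>R z \<Longrightarrow> norm z = 1 \<Longrightarrow> R z = l"
  unfolding R_def by (simp add: power2_norm_eq_inner[symmetric])

lemma vv_le: "(z $ v)\<^sup>2 + (z $ v')\<^sup>2 \<le> z \<bullet> z"
proof -
  have "(z $ v)\<^sup>2 + (z $ v')\<^sup>2 = (\<Sum>i\<in>{v, v'}. (z $ i)\<^sup>2)" using vne by simp
  also have "\<dots> \<le> (\<Sum>i\<in>UNIV. (z $ i)\<^sup>2)" by (rule sum_mono2) auto
  also have "\<dots> = z \<bullet> z" by (simp add: inner_vec_def power2_eq_square)
  finally show ?thesis .
qed

lemma sym_eig:
  "\<exists>x lp. x \<in> Sp \<and> norm x = 1 \<and> (\<forall>i. x $ i \<ge> 0) \<and> Hv x = lp *\<^sub>R x \<and> lp \<ge> Q - m"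
proof -
  obtain z where zS: "z \<in> Sp" and zn: "norm z = 1" and zmax: "\<forall>u\<in>Sp. R u \<le> R z * (u \<bullet> u)"
    using exists_max[OF closed_Sp Sp_scl u0p_Sp u0p_ne] by blast
  define x where "x = (\<chi> i. \<bar>z $ i\<bar>)"
  have xS: "x \<in> Sp" using zS unfolding Sp_def x_def by auto
  have xx: "x \<bullet> x = z \<bullet> z" unfolding x_def inner_vec_def by (simp add: abs_mult_self_eq)
  then have xn: "norm x = 1" using zn by (simp add: norm_eq_sqrt_inner)
  have zz: "z \<bullet> z = 1" using zn by (simp add: power2_norm_eq_inner[symmetric])
  have "R z \<le> R x"
    unfolding R_sum
  proof (intro sum_mono)
    fix i j
    have "hh i j * z $ i * z $ j \<le> \<bar>hh i j * z $ i * z $ j\<bar>" by simp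
    also have "\<dots> = hh i j * x $ i * x $ j" unfolding x_def using hh_nn[of i j] by (simp add: abs_mult)
    finally show "hh i j * z $ i * z $ j \<le> hh i j * x $ i * x $ j" .
  qed
  moreover have "R x \<le> R z" using zmax xS xx zz by auto
  ultimately have Rxz: "R x = R z" by simp
  have max': "\<forall>u\<in>Sp. R u \<le> R x * (u \<bullet> u)" using zmax Rxz by simp
  have rx: "R x = R x * (x \<bullet> x)" using xx zz by simp
  have eig: "Hv x = R x *\<^sub>R x"
    by (rule variational[where S=Sp, OF Sp_add Sp_scl Hv_Sp xS max' rx])
  have "R u0p \<le> R x * 2" using max' u0p_Sp u0p_inner by force
  then have "R x \<ge> Q - m" using R_u0p by linarith
  moreover have "\<forall>i. x $ i \<ge> 0" unfolding x_def by simp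
  ultimately show ?thesis using xS xn eig by blast
qed

lemma anti_eig:
  "\<exists>y lm. y \<in> Sm \<and> norm y = 1 \<and> Hv y = lm *\<^sub>R y \<and> lm \<ge> Q - m"
proof -
  obtain z where zS: "z \<in> Sm" and zn: "norm z = 1" and zmax: "\<forall>u\<in>Sm. R u \<le> R z * (u \<bullet> u)"
    using exists_max[OF closed_Sm Sm_scl u0m_Sm u0m_ne] by blast
  have zz: "z \<bullet> z = 1" using zn by (simp add: power2_norm_eq_inner[symmetric])
  have rz: "R z = R z * (z \<bullet> z)" using zz by simp
  have eig: "Hv z = R z *\<^sub>R z"
    by (rule variational[where S=Sm, OF Sm_add Sm_scl Hv_Sm zS zmax rz])
  have "R u0m \<le> R z * 2" using zmax u0m_Sm u0m_inner by force
  then have "R z \<ge> Q - m" using R_u0m by linarith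
  then show ?thesis using zS zn eig by blast
qed

lemma weight_p:
  assumes "x \<in> Sp" "norm x = 1" "Hv x = lp *\<^sub>R x"
  shows "lp \<le> 2 * Q * (x $ v)\<^sup>2 + m" "lp \<le> Q + m"
proof -
  have xx: "x \<bullet> x = 1" using assms(2) by (simp add: power2_norm_eq_inner[symmetric])
  have lp: "lp = Q * ((x $ v)\<^sup>2 + (x $ v')\<^sup>2) + Ap x" using R_eig[OF assms(3,2)] R_split by simp
  have xv: "x $ v' = x $ v" using assms(1) unfolding Sp_def by auto
  have A: "Ap x \<le> m" using Ap_bound[of x] xx by simp
  show "lp \<le> 2 * Q * (x $ v)\<^sup>2 + m" using lp xv A by simp
  have "Q * ((x $ v)\<^sup>2 + (x $ v')\<^sup>2) \<le> Q * 1"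
    using vv_le[of x] xx Qnn by (intro mult_left_mono) auto
  then show "lp \<le> Q + m" using lp A by simp
qed

lemma weight_m:
  assumes "y \<in> Sm" "norm y = 1" "Hv y = lm *\<^sub>R y"
  shows "lm \<le> 2 * Q * (y $ v)\<^sup>2 + m"
proof -
  have yy: "y \<bullet> y = 1" using assms(2) by (simp add: power2_norm_eq_inner[symmetric])
  have lm: "lm = Q * ((y $ v)\<^sup>2 + (y $ v')\<^sup>2) + Ap y" using R_eig[OF assms(3,2)] R_split by simp
  have yv: "y $ v' = - y $ v" using assms(1) unfolding Sm_def by auto
  have A: "Ap y \<le> m" using Ap_bound[of y] yy by simp
  show ?thesis using lm yv A by simp
qed

lemma pos_edge:
  assumes eig: "Hv x = lp *\<^sub>R x" and nn: "\<forall>i. x $ i \<ge> 0" and e: "E u w"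
  shows "lp * x $ u \<ge> x $ w"
proof -
  have "lp * x $ u = (\<Sum>j\<in>UNIV. hh u j * x $ j)"
    using arg_cong[OF eig, of "%z. z $ u"] by (simp add: Hv_nth)
  moreover have "hh u w * x $ w \<le> (\<Sum>j\<in>UNIV. hh u j * x $ j)"
    by (rule member_le_sum) (auto intro: mult_nonneg_nonneg hh_nn nn[rule_format])
  moreover have "x $ w \<le> hh u w * x $ w"
    using hh_edge[OF e] nn[rule_format, of w] by (simp add: mult_le_cancel_right1)
  ultimately show ?thesis by linarith
qed

lemma pos_all:
  assumes eig: "Hv x = lp *\<^sub>R x" and nn: "\<forall>i. x $ i \<ge> 0" and xv: "x $ v > 0" and lpp: "lp > 0"
  shows "x $ u > 0"
proof -
  have "E\<^sup>*\<^sup>* v u" using cg unfolding connected_graph_def by blast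
  then show ?thesis
  proof (induction rule: rtranclp_induct)
    case base then show ?case by (rule xv)
  next
    case (step w u)
    have "lp * x $ u \<ge> x $ w" by (rule pos_edge[OF eig nn Esym[OF step(2)]])
    then have "lp * x $ u > 0" using step(3) by linarith
    then show ?case using lpp by (simp add: zero_less_mult_iff)
  qed
qed

lemma walk_fwd:
  assumes eig: "Hv x = lp *\<^sub>R x" and nn: "\<forall>i. x $ i \<ge> 0" and lpp: "lp > 0"
    and p0: "x $ (p 0) \<ge> a" and pw: "\<forall>k<d. E (p k) (p (Suc k))"
  shows "k \<le> d \<Longrightarrow> x $ (p k) \<ge> a / lp ^ k"
proof (induction k)
  case 0 then show ?case using p0 by simp
next
  case (Suc k)
  have "lp * x $ (p (Suc k)) \<ge> x $ (p k)"
    using pos_edge[OF eig nn Esym] pw Suc.prems by auto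
  then have "lp * x $ (p (Suc k)) \<ge> a / lp ^ k" using Suc by auto
  then show ?case using lpp by (simp add: divide_le_eq field_simps)
qed

lemma walk_bwd:
  assumes eig: "Hv x = lp *\<^sub>R x" and nn: "\<forall>i. x $ i \<ge> 0" and lpp: "lp > 0"
    and pd: "x $ (p d) \<ge> a" and pw: "\<forall>k<d. E (p k) (p (Suc k))"
  shows "j \<le> d \<Longrightarrow> x $ (p (d - j)) \<ge> a / lp ^ j"
proof (induction j)
  case 0 then show ?case using pd by simp
next
  case (Suc j)
  have k: "Suc (d - Suc j) = d - j" "d - Suc j < d" using Suc.prems by auto
  have "lp * x $ (p (d - Suc j)) \<ge> x $ (p (Suc (d - Suc j)))"
    using pos_edge[OF eig nn] pw k(2) by auto
  then have "lp * x $ (p (d - Suc j)) \<ge> a / lp ^ j" using Suc k(1) by auto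
  then show ?case using lpp by (simp add: divide_le_eq field_simps)
qed

lemma exists_big:
  fixes g :: "nat \<Rightarrow> real"
  assumes "d > 0" "\<bar>\<Sum>k<d. g k\<bar> \<ge> c"
  shows "\<exists>k<d. \<bar>g k\<bar> \<ge> c / d"
proof (rule ccontr)
  assume "\<not> ?thesis"
  then have lt: "\<And>k. k < d \<Longrightarrow> \<bar>g k\<bar> < c / d" by auto
  have "\<bar>\<Sum>k<d. g k\<bar> \<le> (\<Sum>k<d. \<bar>g k\<bar>)" by (rule sum_abs)
  also have "\<dots> < (\<Sum>k<d. c / d)"
    by (rule sum_strict_mono) (use assms lt in auto)
  also have "\<dots> = c" using assms(1) by simp
  finally show False using assms(2) by simp
qed

lemma gap:
  assumes eigx: "Hv x = lp *\<^sub>R x" and xpos: "\<forall>i. x $ i > 0" and xS: "x \<in> Sp"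
    and eigy: "Hv y = lm *\<^sub>R y" and yn: "norm y = 1" and yS: "y \<in> Sm"
    and walk: "(E ^^ d) v v'" and dpos: "d > 0" and lp1: "lp \<ge> 1"
  shows "lp - lm \<ge> 2 * (y $ v)\<^sup>2 / (real d ^ 2 * lp ^ (d - 1))"
proof -
  define a where "a = x $ v"
  define b where "b = y $ v"
  have ap: "a > 0" using xpos a_def by auto
  have xv': "x $ v' = a" using xS unfolding Sp_def a_def by auto
  have yv': "y $ v' = - b" using yS unfolding Sm_def b_def by auto
  have nn: "\<forall>i. x $ i \<ge> 0" using xpos by (simp add: less_imp_le)
  have lpp: "lp > 0" using lp1 by simp
  have yy: "y \<bullet> y = 1" using yn by (simp add: power2_norm_eq_inner[symmetric])
  define G where "G i j = hh i j * x $ i * x $ j * (y $ i / x $ i - y $ j / x $ j)\<^sup>2" for i j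
  have Gnn: "G i j \<ge> 0" for i j unfolding G_def using hh_nn nn by simp
  have "lp - lm = lp * (y \<bullet> y) - R y" using R_eig[OF eigy yn] yy by simp
  also have "\<dots> = (1/2) * (\<Sum>i\<in>UNIV. \<Sum>j\<in>UNIV. G i j)"
    unfolding G_def by (rule ground_state[OF eigx]) (use xpos in auto)
  finally have gapeq: "lp - lm = (1/2) * (\<Sum>i\<in>UNIV. \<Sum>j\<in>UNIV. G i j)" .
  obtain p where p0: "p 0 = v" and pd: "p d = v'" and pw: "\<forall>k<d. E (p k) (p (Suc k))"
    using walk_exists[OF walk] by blast
  define f where "f k = y $ (p k) / x $ (p k)" for k
  have "(\<Sum>k<d. f k - f (Suc k)) = f 0 - f d" by (rule sum_lessThan_telescope')
  also have "\<dots> = 2 * b / a" unfolding f_def p0 pd xv' yv' using a_def b_def by simp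
  finally have "\<bar>\<Sum>k<d. f k - f (Suc k)\<bar> \<ge> 2 * \<bar>b\<bar> / a" using ap by (simp add: abs_mult)
  from exists_big[OF dpos this] obtain k where kd: "k < d"
    and big: "\<bar>f k - f (Suc k)\<bar> \<ge> 2 * \<bar>b\<bar> / a / d" by blast
  have l1: "x $ (p k) \<ge> a / lp ^ k"
    by (rule walk_fwd[OF eigx nn lpp _ pw]) (use p0 a_def kd in auto)
  have l2: "x $ (p (Suc k)) \<ge> a / lp ^ (d - Suc k)"
    using walk_bwd[OF eigx nn lpp _ pw, of a "d - Suc k"] pd xv' kd by auto
  have pow: "lp ^ k * lp ^ (d - Suc k) = lp ^ (d - 1)"
    using kd by (simp add: power_add[symmetric])
  have xx: "x $ (p k) * x $ (p (Suc k)) \<ge> a\<^sup>2 / lp ^ (d - 1)"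
  proof -
    have "x $ (p k) * x $ (p (Suc k)) \<ge> (a / lp ^ k) * (a / lp ^ (d - Suc k))"
      by (rule mult_mono[OF l1 l2]) (use ap lpp nn in auto)
    also have "(a / lp ^ k) * (a / lp ^ (d - Suc k)) = a\<^sup>2 / lp ^ (d - 1)"
      using pow by (simp add: power2_eq_square)
    finally show ?thesis by simp
  qed
  have dd: "(f k - f (Suc k))\<^sup>2 \<ge> (2 * \<bar>b\<bar> / a / d)\<^sup>2"
  proof -
    have c0: "0 \<le> 2 * \<bar>b\<bar> / a / d" using ap by simp
    have "(2 * \<bar>b\<bar> / a / d)\<^sup>2 \<le> (\<bar>f k - f (Suc k)\<bar>)\<^sup>2"
      by (rule power_mono[OF big c0])
    then show ?thesis by simp
  qed
  have "G (p k) (p (Suc k)) \<ge> (a\<^sup>2 / lp ^ (d - 1)) * (2 * \<bar>b\<bar> / a / d)\<^sup>2"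
  proof -
    have h1: "hh (p k) (p (Suc k)) \<ge> 1" using hh_edge pw kd by auto
    have "(a\<^sup>2 / lp ^ (d - 1)) * (2 * \<bar>b\<bar> / a / d)\<^sup>2 \<le> (x $ (p k) * x $ (p (Suc k))) * (f k - f (Suc k))\<^sup>2"
      by (rule mult_mono[OF xx dd]) (use nn in auto)
    also have "\<dots> \<le> hh (p k) (p (Suc k)) * ((x $ (p k) * x $ (p (Suc k))) * (f k - f (Suc k))\<^sup>2)"
    proof -
      have T0: "0 \<le> (x $ (p k) * x $ (p (Suc k))) * (f k - f (Suc k))\<^sup>2" using nn by simp
      show ?thesis using mult_right_mono[OF h1 T0] by simp
    qed
    also have "\<dots> = G (p k) (p (Suc k))" unfolding G_def f_def by (simp add: mult.assoc)
    finally show ?thesis .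
  qed
  also have "G (p k) (p (Suc k)) \<le> (\<Sum>j\<in>UNIV. G (p k) j)"
    by (rule member_le_sum) (auto intro: Gnn)
  also have "\<dots> \<le> (\<Sum>i\<in>UNIV. \<Sum>j\<in>UNIV. G i j)"
    by (rule member_le_sum[of _ _ "\<lambda>i. \<Sum>j\<in>UNIV. G i j"]) (auto intro: sum_nonneg Gnn)
  finally have S: "(\<Sum>i\<in>UNIV. \<Sum>j\<in>UNIV. G i j) \<ge> (a\<^sup>2 / lp ^ (d - 1)) * (2 * \<bar>b\<bar> / a / d)\<^sup>2" .
  have q1: "(2 * \<bar>b\<bar> / a / d)\<^sup>2 = 4 * b\<^sup>2 / (a\<^sup>2 * (real d)\<^sup>2)"
    by (simp add: power_divide power_mult_distrib)
  have "(a\<^sup>2 / lp ^ (d - 1)) * (2 * \<bar>b\<bar> / a / d)\<^sup>2 = 4 * b\<^sup>2 / (real d ^ 2 * lp ^ (d - 1))"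
    unfolding q1 using ap by (simp add: field_simps)
  then show ?thesis using gapeq S b_def by simp
qed

end


definition cx :: "real^'n::finite \<Rightarrow> complex^'n" where
  "cx z = (\<chi> i. complex_of_real (z $ i))"

lemma cx_nth[simp]: "cx z $ i = of_real (z $ i)" by (simp add: cx_def)
lemma cx_add: "cx (p + q) = cx p + cx q" by (simp add: vec_eq_iff)
lemma cx_diff: "cx (p - q) = cx p - cx q" by (simp add: vec_eq_iff)
lemma cx_scaleR: "cx (c *\<^sub>R p) = c *\<^sub>R cx p" by (simp add: vec_eq_iff vector_scaleR_component csc)
lemma cip_cx: "cip (cx p) (cx q) = of_real (p \<bullet> q)"
  by (simp add: cip_def inner_vec_def)
lemma norm_cx: "norm (cx p) = norm p"
  by (simp add: norm_vec_def)
lemma neg_mv: "(- (M::complex^'n::finite^'n)) *v w = - (M *v w)"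
  by (simp add: matrix_vector_mult_def vec_eq_iff sum_negf)

lemma axis_cx: "axis i (1::complex) = cx (axis i 1)"
  by (simp add: vec_eq_iff axis_def)

context gsetup
begin

abbreviation "Mt t \<equiv> cscale_mat (\<i> * complex_of_real t) (hamiltonian E Q v v')"

lemma Hc_nth: "hamiltonian E Q v v' $ i $ j = of_real (hh i j)"
  by (auto simp: hamiltonian_def adj_matrix_def potential_matrix_def hh_def)

lemma Mt_nth: "Mt t $ i $ j = \<i> * of_real t * of_real (hh i j)"
  by (simp add: cscale_mat_def Hc_nth)

lemma Mt_cx: "Mt t *v cx z = (\<i> * of_real t) *s cx (Hv z)"
  by (simp add: vec_eq_iff matrix_vector_mult_def Mt_nth Hv_nth sum_distrib_left mult.assoc)

lemma Mt_adj: "cip w (Mt t *v r) = cip ((- Mt t) *v w) r"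
proof -
  have "cip w (Mt t *v r) = (\<Sum>i\<in>UNIV. \<Sum>j\<in>UNIV. \<i> * of_real t * of_real (hh i j) * cnj (w $ i) * r $ j)"
    by (simp add: cip_def matrix_vector_mult_def Mt_nth sum_distrib_left mult_ac)
  also have "\<dots> = (\<Sum>j\<in>UNIV. \<Sum>i\<in>UNIV. \<i> * of_real t * of_real (hh i j) * cnj (w $ i) * r $ j)"
    by (rule sum.swap)
  also have "\<dots> = cip ((- Mt t) *v w) r"
    by (simp add: cip_def matrix_vector_mult_def Mt_nth sum_distrib_right sum_distrib_left mult_ac hh_sym)
  finally show ?thesis .
qed

definition U :: "real \<Rightarrow> complex^'n \<Rightarrow> complex^'n" where
  "U t = rep (exp (opm (Mt t)))"

lemma U_eig: "Hv z = l *\<^sub>R z \<Longrightarrow> U t (cx z) = exp (\<i> * of_real (t * l)) *s cx z"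
  unfolding U_def
  by (rule exp_eigen) (simp add: Mt_cx cx_scaleR vec_eq_iff vector_scaleR_component csc mult_ac)

lemma U'_eig: "Hv z = l *\<^sub>R z \<Longrightarrow> rep (exp (opm (- Mt t))) (cx z) = exp (- \<i> * of_real (t * l)) *s cx z"
  by (rule exp_eigen) (simp add: neg_mv Mt_cx cx_scaleR vec_eq_iff vector_scaleR_component csc mult_ac)

lemma U_unit: "norm (U t w) = norm w"
  unfolding U_def by (rule exp_unitary) (rule Mt_adj)

lemma U_adj: "cip w (U t r) = cip (rep (exp (opm (- Mt t))) w) r"
  unfolding U_def by (rule exp_adj) (rule Mt_adj)

lemma tp_U: "transfer_prob E Q v v' t = (cmod (U t (cx (axis v' 1)) $ v))\<^sup>2"
  unfolding transfer_prob_def U_def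
  by (simp add: mv_axis[symmetric] mat_exp_apply axis_cx[symmetric])

lemma tp_le1: "transfer_prob E Q v v' t \<le> 1"
proof -
  have "cmod (U t (cx (axis v' 1)) $ v) \<le> norm (U t (cx (axis v' 1)))" by (rule Finite_Cartesian_Product.norm_nth_le)
  also have "\<dots> = 1" by (simp add: U_unit norm_cx)
  finally show ?thesis unfolding tp_U by (simp add: power_le_one)
qed

lemma tp_nn: "transfer_prob E Q v v' t \<ge> 0" unfolding transfer_prob_def by simp

lemma U_add: "U t (p + q) = U t p + U t q" unfolding U_def by simp
lemma U_diff: "U t (p - q) = U t p - U t q" unfolding U_def by simp
lemma U_scaleR: "U t (c *\<^sub>R p) = c *\<^sub>R U t p" unfolding U_def by simp

lemma xy_orth: "x \<in> Sp \<Longrightarrow> y \<in> Sm \<Longrightarrow> x \<bullet> y = 0"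
proof -
  assume xS: "x \<in> Sp" and yS: "y \<in> Sm"
  have "x \<bullet> y = (\<Sum>j\<in>UNIV. x $ (\<sigma> j) * y $ (\<sigma> j))"
    unfolding inner_vec_def using sum_s[of "\<lambda>j. x $ j * y $ j"] by simp
  also have "\<dots> = - (x \<bullet> y)"
    using xS yS unfolding Sp_def Sm_def inner_vec_def by (simp add: sum_negf)
  finally show ?thesis by simp
qed

lemma inner_ax: "(z::real^'n) \<bullet> axis k 1 = z $ k" by (simp add: inner_axis)

lemma amp:
  assumes xS: "x \<in> Sp" and xn: "norm x = 1" and xe: "Hv x = lp *\<^sub>R x"
    and yS: "y \<in> Sm" and yn: "norm y = 1" and ye: "Hv y = lm *\<^sub>R y"
  shows "\<exists>err. U t (cx (axis v' 1)) $ v = of_real ((x $ v)\<^sup>2) * exp (\<i> * of_real (t * lp))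
            - of_real ((y $ v)\<^sup>2) * exp (\<i> * of_real (t * lm)) + err
          \<and> cmod err \<le> 1 - (x $ v)\<^sup>2 - (y $ v)\<^sup>2"
proof -
  define a where "a = x $ v"
  define b where "b = y $ v"
  define ev :: "real^'n" where "ev = axis v 1"
  define ev' :: "real^'n" where "ev' = axis v' 1"
  have xv': "x $ v' = a" using xS unfolding Sp_def a_def by auto
  have yv': "y $ v' = - b" using yS unfolding Sm_def b_def by auto
  have xx: "x \<bullet> x = 1" using xn by (simp add: power2_norm_eq_inner[symmetric])
  have yy: "y \<bullet> y = 1" using yn by (simp add: power2_norm_eq_inner[symmetric])
  have xy: "x \<bullet> y = 0" by (rule xy_orth[OF xS yS])
  have yx: "y \<bullet> x = 0" using xy by (simp add: inner_commute)
  have evv: "ev \<bullet> ev = 1" "ev' \<bullet> ev' = 1" unfolding ev_def ev'_def by (simp_all add: inner_ax)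
  have xev: "x \<bullet> ev = a" "y \<bullet> ev = b" "x \<bullet> ev' = a" "y \<bullet> ev' = - b"
    unfolding ev_def ev'_def by (simp_all add: inner_ax a_def b_def xv' yv')
  define rr where "rr = ev - a *\<^sub>R x - b *\<^sub>R y"
  define rr' where "rr' = ev' - a *\<^sub>R x + b *\<^sub>R y"
  have xr': "x \<bullet> rr' = 0" "y \<bullet> rr' = 0" unfolding rr'_def
    by (simp_all add: inner_diff_right inner_add_right xev xx yy xy yx)
  have xr: "x \<bullet> rr = 0" "y \<bullet> rr = 0" unfolding rr_def
    by (simp_all add: inner_diff_right inner_add_right xev xx yy xy yx)
  have rrr: "rr \<bullet> rr = 1 - a\<^sup>2 - b\<^sup>2"
  proof -
    have "rr \<bullet> rr = rr \<bullet> ev - a * (rr \<bullet> x) - b * (rr \<bullet> y)"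
      by (subst (2) rr_def) (simp add: inner_diff_right)
    also have "\<dots> = rr \<bullet> ev" using xr by (simp add: inner_commute)
    also have "\<dots> = 1 - a\<^sup>2 - b\<^sup>2" unfolding rr_def
      by (simp add: inner_diff_left evv xev power2_eq_square)
    finally show ?thesis .
  qed
  have rrr': "rr' \<bullet> rr' = 1 - a\<^sup>2 - b\<^sup>2"
  proof -
    have "rr' \<bullet> rr' = rr' \<bullet> ev' - a * (rr' \<bullet> x) + b * (rr' \<bullet> y)"
      by (subst (2) rr'_def) (simp add: inner_diff_right inner_add_right)
    also have "\<dots> = rr' \<bullet> ev'" using xr' by (simp add: inner_commute)
    also have "\<dots> = 1 - a\<^sup>2 - b\<^sup>2" unfolding rr'_def
      by (simp add: inner_diff_left inner_add_left evv xev power2_eq_square)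
    finally show ?thesis .
  qed
  define e1 where "e1 = exp (\<i> * of_real (t * lp))"
  define e2 where "e2 = exp (\<i> * of_real (t * lm))"
  have Ux: "U t (cx x) = e1 *s cx x" unfolding e1_def by (rule U_eig[OF xe])
  have Uy: "U t (cx y) = e2 *s cx y" unfolding e2_def by (rule U_eig[OF ye])
  have ev'_dec: "ev' = a *\<^sub>R x - b *\<^sub>R y + rr'" unfolding rr'_def by simp
  have ev_dec: "ev = a *\<^sub>R x + b *\<^sub>R y + rr" unfolding rr_def by simp
  define err where "err = cip (cx rr) (U t (cx rr'))"
  have z1: "cip (cx x) (U t (cx rr')) = 0"
    unfolding U_adj U'_eig[OF xe] by (simp add: cip_cx xr')
  have z2: "cip (cx y) (U t (cx rr')) = 0"
    unfolding U_adj U'_eig[OF ye] by (simp add: cip_cx xr')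
  have "U t (cx rr') $ v = cip (cx ev) (U t (cx rr'))"
    unfolding ev_def axis_cx[symmetric] by simp
  also have "\<dots> = err" unfolding ev_dec err_def
    by (simp add: cx_add cx_scaleR z1 z2)
  finally have Urv: "U t (cx rr') $ v = err" .
  have "U t (cx (axis v' 1)) $ v = U t (cx ev') $ v" unfolding ev'_def ..
  also have "\<dots> = of_real a * (e1 * of_real a) - of_real b * (e2 * of_real b) + err"
    unfolding ev'_dec cx_add cx_diff cx_scaleR U_add U_diff U_scaleR Ux Uy
    by (simp add: Urv csc a_def b_def)
  also have "\<dots> = of_real (a\<^sup>2) * e1 - of_real (b\<^sup>2) * e2 + err"
    by (simp add: power2_eq_square mult_ac)
  finally have A: "U t (cx (axis v' 1)) $ v = of_real (a\<^sup>2) * e1 - of_real (b\<^sup>2) * e2 + err" .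
  have "cmod err \<le> norm (cx rr) * norm (U t (cx rr'))" unfolding err_def by (rule cip_cs)
  also have "\<dots> = norm rr * norm rr'" by (simp add: U_unit norm_cx)
  also have "\<dots> = 1 - a\<^sup>2 - b\<^sup>2"
  proof -
    have "0 \<le> rr \<bullet> rr" by simp
    then have "\<bar>1 - a\<^sup>2 - b\<^sup>2\<bar> = 1 - a\<^sup>2 - b\<^sup>2" using rrr by simp
    then show ?thesis using rrr rrr' by (simp add: norm_eq_sqrt_inner)
  qed
  finally show ?thesis using A unfolding e1_def e2_def a_def b_def by blast
qed

lemma m_ge1: "m \<ge> 1"
proof -
  have "E\<^sup>*\<^sup>* v v'" using cg unfolding connected_graph_def by blast
  then obtain w where w: "E v w"
  proof (cases rule: converse_rtranclpE)
    case base then show ?thesis using vne by simp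
  next
    case (step y) then show ?thesis using that by blast
  qed
  then have "{j. E v j} \<noteq> {}" by auto
  then have "card {j. E v j} > 0" by (simp add: card_gt_0_iff)
  then have "card {j. E v j} \<ge> 1" by simp
  also have "card {j. E v j} = degree E v" by (simp add: degree_def)
  also have "degree E v \<le> max_degree E" unfolding max_degree_def by (rule Max_ge) auto
  finally show ?thesis by simp
qed

lemma dist_walk: "(E ^^ graph_dist E v v') v v'" "graph_dist E v v' > 0"
proof -
  have "E\<^sup>*\<^sup>* v v'" using cg unfolding connected_graph_def by blast
  from rtranclp_imp_relpowp[OF this] obtain n where "(E ^^ n) v v'" by (elim exE)
  then show w: "(E ^^ graph_dist E v v') v v'" unfolding graph_dist_def by (rule LeastI)
  show "graph_dist E v v' > 0"
  proof (rule ccontr)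
    assume "\<not> graph_dist E v v' > 0"
    then have "graph_dist E v v' = 0" by simp
    then show False using w vne by simp
  qed
qed

lemma main_Q:
  assumes Qb: "Q \<ge> 4 * m + 1"
  shows "\<exists>t\<ge>0. transfer_prob E Q v v' t \<ge> 1 - 8 * m / Q
     \<and> t \<le> 2 * pi * real (graph_dist E v v') ^ 2 * 2 ^ (graph_dist E v v' - 1) * Q ^ (graph_dist E v v' - 1)"
proof -
  define d where "d = graph_dist E v v'"
  have m0: "m \<ge> 0" by simp
  have Qp: "Q > 0" using Qb m0 by linarith
  obtain x lp where xS: "x \<in> Sp" and xn: "norm x = 1" and xnn: "\<forall>i. x $ i \<ge> 0"
    and xe: "Hv x = lp *\<^sub>R x" and lpl: "lp \<ge> Q - m" using sym_eig by blast
  obtain y lm where yS: "y \<in> Sm" and yn: "norm y = 1"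
    and ye: "Hv y = lm *\<^sub>R y" and lml: "lm \<ge> Q - m" using anti_eig by blast
  define a where "a = x $ v"
  define b where "b = y $ v"
  have wa: "lp \<le> 2 * Q * a\<^sup>2 + m" "lp \<le> Q + m" using weight_p[OF xS xn xe] a_def by auto
  have wb: "lm \<le> 2 * Q * b\<^sup>2 + m" using weight_m[OF yS yn ye] b_def by auto
  have a2: "2 * Q * a\<^sup>2 \<ge> Q - 2 * m" using wa lpl by linarith
  have b2: "2 * Q * b\<^sup>2 \<ge> Q - 2 * m" using wb lml by linarith
  have lp1: "lp \<ge> 1" using lpl Qb m0 by linarith
  have "2 * Q * a\<^sup>2 > 0" using a2 Qb m0 by linarith
  then have a2p: "a\<^sup>2 > 0" using Qp by (simp add: zero_less_mult_iff)
  have "a \<noteq> 0" using a2p by auto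
  moreover have "a \<ge> 0" using xnn a_def by auto
  ultimately have ap: "a > 0" by simp
  have xpos: "\<forall>i. x $ i > 0" using pos_all[OF xe xnn] ap a_def lp1 by auto
  have dw: "(E ^^ d) v v'" "d > 0" using dist_walk d_def by auto
  have gp: "lp - lm \<ge> 2 * b\<^sup>2 / (real d ^ 2 * lp ^ (d - 1))"
    using gap[OF xe xpos xS ye yn yS dw lp1] b_def by simp
  have b2h: "2 * b\<^sup>2 \<ge> 1/2"
  proof -
    have "Q - 2 * m \<ge> Q / 2" using Qb by linarith
    then have "2 * Q * b\<^sup>2 \<ge> Q / 2" using b2 by linarith
    then show ?thesis using Qp by (simp add: field_simps)
  qed
  define g where "g = 2 * b\<^sup>2 / (real d ^ 2 * lp ^ (d - 1))"
  have gpos: "g > 0" unfolding g_def using b2h dw lp1 by (intro divide_pos_pos) auto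
  have gl: "lp - lm \<ge> g" using gp g_def by simp
  define t where "t = pi / (lp - lm)"
  have t0: "t \<ge> 0" unfolding t_def using gpos gl by simp
  have tle: "t \<le> 2 * pi * real d ^ 2 * 2 ^ (d - 1) * Q ^ (d - 1)"
  proof -
    have "t \<le> pi / g" unfolding t_def
      by (rule divide_left_mono[OF gl]) (use gpos gl in auto)
    also have "pi / g = pi * (real d ^ 2 * lp ^ (d - 1)) / (2 * b\<^sup>2)" unfolding g_def by simp
    also have "\<dots> \<le> pi * (real d ^ 2 * lp ^ (d - 1)) / (1/2)"
      by (rule divide_left_mono[OF b2h]) (use lp1 b2h in auto)
    also have "\<dots> = 2 * pi * real d ^ 2 * lp ^ (d - 1)" by simp
    also have "\<dots> \<le> 2 * pi * real d ^ 2 * (2 * Q) ^ (d - 1)"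
    proof -
      have "lp ^ (d - 1) \<le> (2 * Q) ^ (d - 1)"
        by (rule power_mono) (use wa lp1 Qb in auto)
      then show ?thesis by (intro mult_left_mono) auto
    qed
    also have "\<dots> = 2 * pi * real d ^ 2 * 2 ^ (d - 1) * Q ^ (d - 1)" by (simp add: power_mult_distrib)
    finally show ?thesis .
  qed
  obtain err where amp_eq: "U t (cx (axis v' 1)) $ v = of_real (a\<^sup>2) * exp (\<i> * of_real (t * lp))
            - of_real (b\<^sup>2) * exp (\<i> * of_real (t * lm)) + err"
    and errb: "cmod err \<le> 1 - a\<^sup>2 - b\<^sup>2"
    using amp[OF xS xn xe yS yn ye, of t] a_def b_def by blast
  have tl: "t * lm = t * lp - pi" unfolding t_def using gpos gl by (simp add: field_simps)
  have e2: "exp (\<i> * of_real (t * lm)) = - exp (\<i> * of_real (t * lp))"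
  proof -
    have "\<i> * of_real (t * lm) = \<i> * of_real (t * lp) - \<i> * of_real pi" unfolding tl
      by (simp add: algebra_simps)
    then have "exp (\<i> * of_real (t * lm)) = exp (\<i> * of_real (t * lp)) / exp (\<i> * of_real pi)"
      by (simp add: exp_diff)
    then show ?thesis by simp
  qed
  have amp2: "U t (cx (axis v' 1)) $ v = of_real (a\<^sup>2 + b\<^sup>2) * exp (\<i> * of_real (t * lp)) + err"
    unfolding amp_eq e2 by (simp add: algebra_simps)
  define eta where "eta = 2 * (a\<^sup>2 + b\<^sup>2) - 1"
  have N1: "cmod (of_real (a\<^sup>2 + b\<^sup>2) * exp (\<i> * of_real (t * lp))) - cmod err \<le> cmod (U t (cx (axis v' 1)) $ v)"
    unfolding amp2 by (rule norm_diff_ineq)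
  have N2: "cmod (of_real (a\<^sup>2 + b\<^sup>2) * exp (\<i> * of_real (t * lp))) = a\<^sup>2 + b\<^sup>2"
  proof -
    have "cmod (of_real (a\<^sup>2 + b\<^sup>2) * exp (\<i> * of_real (t * lp))) = \<bar>a\<^sup>2 + b\<^sup>2\<bar>"
      by (simp only: norm_mult norm_of_real norm_exp_i_times mult_1_right)
    then show ?thesis by simp
  qed
  have N3: "(a\<^sup>2 + b\<^sup>2) - cmod err \<le> cmod (U t (cx (axis v' 1)) $ v)"
    using N1 unfolding N2 .
  have N4: "eta \<le> (a\<^sup>2 + b\<^sup>2) - cmod err" unfolding eta_def using errb by simp
  have c1: "cmod (U t (cx (axis v' 1)) $ v) \<ge> eta" using order_trans[OF N4 N3] .
  have eta1: "eta \<ge> 1 - 4 * m / Q"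
  proof -
    have "2 * Q * (a\<^sup>2 + b\<^sup>2) \<ge> 2 * Q - 4 * m" using a2 b2 by (simp add: algebra_simps)
    then have "(2 * Q - 4 * m) / (2 * Q) \<le> a\<^sup>2 + b\<^sup>2" using Qp by (simp add: pos_divide_le_eq mult.commute)
    moreover have "(2 * Q - 4 * m) / (2 * Q) = 1 - 2 * m / Q" using Qp by (simp add: diff_divide_distrib)
    ultimately have "a\<^sup>2 + b\<^sup>2 \<ge> 1 - 2 * m / Q" by simp
    then show ?thesis unfolding eta_def by simp
  qed
  have q4: "4 * m / Q \<le> 1" using Qb Qp by (simp add: pos_divide_le_eq)
  have eta0: "eta \<ge> 0" using eta1 q4 by linarith
  have p1: "transfer_prob E Q v v' t \<ge> eta\<^sup>2"
    unfolding tp_U by (rule power_mono[OF c1 eta0])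
  have "eta\<^sup>2 \<ge> (1 - 4 * m / Q)\<^sup>2" by (rule power_mono[OF eta1]) (use q4 in simp)
  moreover have "(1 - 4 * m / Q)\<^sup>2 \<ge> 1 - 8 * m / Q"
  proof -
    have "(1 - 4 * m / Q)\<^sup>2 = 1 - 2 * (4 * m / Q) + (4 * m / Q)\<^sup>2" by (simp add: power2_diff)
    moreover have "(4 * m / Q)\<^sup>2 \<ge> 0" by simp
    ultimately show ?thesis by simp
  qed
  ultimately have "transfer_prob E Q v v' t \<ge> 1 - 8 * m / Q" using p1 by linarith
  then show ?thesis using t0 tle d_def by blast
qed

end

lemma bnd_big:
  fixes m Q :: real
  assumes m1: "m \<ge> 1" and Qb: "Q \<ge> 4 * m + 1"
  shows "1 - 8 * m / Q > 1 - 16 * sqrt (m + 1) / sqrt Q"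
proof -
  have Qp: "Q > 0" using m1 Qb by linarith
  have sQ: "sqrt Q > 0" using Qp by simp
  have "sqrt m * sqrt m \<le> sqrt (m + 1) * sqrt Q"
    by (rule mult_mono) (use m1 Qb in auto)
  then have "m \<le> sqrt (m + 1) * sqrt Q" using m1 by simp
  then have "8 * m < 16 * sqrt (m + 1) * sqrt Q" using m1 by linarith
  then have "8 * m / (sqrt Q * sqrt Q) < 16 * sqrt (m + 1) * sqrt Q / (sqrt Q * sqrt Q)"
    by (rule divide_strict_right_mono) (use sQ in simp)
  moreover have "sqrt Q * sqrt Q = Q" using Qp by simp
  moreover have "16 * sqrt (m + 1) * sqrt Q / (sqrt Q * sqrt Q) = 16 * sqrt (m + 1) / sqrt Q"
    by (rule nonzero_mult_divide_mult_cancel_right) (use sQ in simp)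
  ultimately show ?thesis by simp
qed

lemma bnd_small:
  fixes m Q :: real
  assumes m1: "m \<ge> 1" and Qm: "Q \<ge> m" and Qs: "Q < 4 * m + 1"
  shows "1 - 16 * sqrt (m + 1) / sqrt Q < 0"
proof -
  have Qp: "Q > 0" using m1 Qm by linarith
  have "4 * m + 1 \<le> 256 * (m + 1)" using m1 by simp
  then have "sqrt Q < sqrt (256 * (m + 1))" using Qs by (intro real_sqrt_less_mono) linarith
  also have "sqrt (256 * (m + 1)) = sqrt 256 * sqrt (m + 1)"
    by (rule real_sqrt_mult)
  also have "sqrt 256 = (16::real)" by (rule real_sqrt_unique) auto
  finally have "sqrt Q < 16 * sqrt (m + 1)" .
  then have "1 < 16 * sqrt (m + 1) / sqrt Q" using Qp by (simp add: less_divide_eq)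
  then show ?thesis by simp
qed

theorem theorem2:
  fixes E :: "'n::finite \<Rightarrow> 'n \<Rightarrow> bool" and \<sigma> :: "'n \<Rightarrow> 'n" and v :: 'n
  assumes "simple_graph E" and "connected_graph E"
    and "involution E \<sigma>" and "\<sigma> v \<noteq> v"
  shows "(\<forall>Q::real. Q \<ge> real (max_degree E) \<longrightarrow>
            fidelity E Q v (\<sigma> v) > 1 - 16 * sqrt (real (max_degree E) + 1) / sqrt Q)
       \<and> (\<exists>T :: real \<Rightarrow> real.
            (\<forall>Q. Q \<ge> real (max_degree E) \<longrightarrow> T Q \<ge> 0 \<and>
               transfer_prob E Q v (\<sigma> v) (T Q) > 1 - 16 * sqrt (real (max_degree E) + 1) / sqrt Q)
          \<and> T \<in> O[at_top](\<lambda>Q. Q ^ (graph_dist E v (\<sigma> v) - 1)))"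
proof -
  define m where "m = real (max_degree E)"
  define d where "d = graph_dist E v (\<sigma> v)"
  define C where "C = 2 * pi * real d ^ 2 * 2 ^ (d - 1)"
  define bd where "bd Q = 1 - 16 * sqrt (m + 1) / sqrt Q" for Q
  have G: "gsetup E \<sigma> v Q" if "Q \<ge> 0" for Q
    using assms that by (simp add: gsetup_def)
  have m1: "m \<ge> 1" using gsetup.m_ge1[OF G[of 0]] m_def by simp
  have P: "\<exists>t\<ge>0. transfer_prob E Q v (\<sigma> v) t \<ge> 1 - 8 * m / Q \<and> t \<le> C * Q ^ (d - 1)"
    if "Q \<ge> 4 * m + 1" for Q
  proof -
    have "Q \<ge> 0" using that m1 by linarith
    from gsetup.main_Q[OF G[OF this]] that show ?thesis
      unfolding m_def C_def d_def by (simp add: mult.assoc)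
  qed
  have le1: "transfer_prob E Q v (\<sigma> v) t \<le> 1" if "Q \<ge> 0" for Q t
    using gsetup.tp_le1[OF G[OF that]] .
  have nn: "transfer_prob E Q v (\<sigma> v) t \<ge> 0" for Q t
    unfolding transfer_prob_def by simp
  define T where "T Q = (if Q \<ge> 4 * m + 1 then
      (SOME t. t \<ge> 0 \<and> transfer_prob E Q v (\<sigma> v) t \<ge> 1 - 8 * m / Q \<and> t \<le> C * Q ^ (d - 1)) else 0)" for Q
  have TQ: "T Q \<ge> 0 \<and> transfer_prob E Q v (\<sigma> v) (T Q) > bd Q" if Qm: "Q \<ge> m" for Q
  proof (cases "Q \<ge> 4 * m + 1")
    case True
    have "T Q \<ge> 0 \<and> transfer_prob E Q v (\<sigma> v) (T Q) \<ge> 1 - 8 * m / Q \<and> T Q \<le> C * Q ^ (d - 1)"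
      unfolding T_def using True someI_ex[OF P[OF True]] by simp
    moreover have "1 - 8 * m / Q > bd Q" unfolding bd_def by (rule bnd_big[OF m1 True])
    ultimately show ?thesis by linarith
  next
    case False
    then have "T Q = 0" unfolding T_def by simp
    moreover have "bd Q < 0" unfolding bd_def using bnd_small[OF m1 Qm] False by simp
    ultimately show ?thesis using nn[of Q 0] by simp
  qed
  have TB: "T Q \<le> C * Q ^ (d - 1)" if "Q \<ge> 4 * m + 1" for Q
    unfolding T_def using that someI_ex[OF P[OF that]] by simp
  have part1: "\<forall>Q::real. Q \<ge> m \<longrightarrow> fidelity E Q v (\<sigma> v) > bd Q"
  proof (intro allI impI)
    fix Q :: real assume Qm: "Q \<ge> m"
    have Q0: "Q \<ge> 0" using Qm m1 by linarith
    have "bdd_above ((\<lambda>t. transfer_prob E Q v (\<sigma> v) t) ` {0..})"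
      by (intro bdd_aboveI2[where M=1]) (rule le1[OF Q0])
    then have "transfer_prob E Q v (\<sigma> v) (T Q) \<le> fidelity E Q v (\<sigma> v)"
      unfolding fidelity_def using TQ[OF Qm] by (intro cSUP_upper) auto
    then show "fidelity E Q v (\<sigma> v) > bd Q" using TQ[OF Qm] by linarith
  qed
  have part2: "T \<in> O[at_top](\<lambda>Q. Q ^ (d - 1))"
  proof (rule bigoI)
    show "\<forall>\<^sub>F Q in at_top. norm (T Q) \<le> C * norm (Q ^ (d - 1))"
      unfolding eventually_at_top_linorder
    proof (intro exI allI impI)
      fix Q :: real assume Qb: "Q \<ge> 4 * m + 1"
      have Q0: "Q \<ge> 0" using Qb m1 by linarith
      have "T Q \<ge> 0" using TQ[of Q] Qb m1 by simp
      then show "norm (T Q) \<le> C * norm (Q ^ (d - 1))" using TB[OF Qb] Q0 by simp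
    qed
  qed
  show ?thesis using part1 TQ part2 unfolding m_def d_def bd_def by blast
qed


end
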